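(* Let $G \leq \mathrm{Aut}(K_{n,n})$ be a subgroup isomorphic to $A_4$. Suppose there is an embedding $\Gamma$ of $K_{n,n}$ in $S^3$ such that $G$ is induced on $\Gamma$ by an isomorphic subgroup $\widehat{G} \leq \mathrm{SO}(4)$. Then no element of order 2 of $G$ fixes exactly one vertex of $V$.
   Context: $K_{n,n}$ is the complete bipartite graph with vertex sets $V$, $W$ of $n$ vertices each; every vertex of $V$ is adjacent to every vertex of $W$, and there are no other edges. $S^3$ is the unit sphere in $\mathbb{R}^4$, on which $\mathrm{SO}(4)$ acts by isometries. "$G$ is induced on $\Gamma$ by an isomorphic subgroup $\widehat{G} \leq \mathrm{SO}(4)$" means every element of $\widehat{G}$ leaves $\Gamma$ setwise invariant, and restricting to $\Gamma$ gives an isomorphism from $\widehat{G}$ onto $G$ (each element of $\widehat{G}$ inducing the corresponding automorphism of the graph). *)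

theory Defs
  imports "HOL-Analysis.Analysis" "HOL-Algebra.Sym_Groups" "HOL-Library.Numeral_Type"
begin

definition KV :: "nat \<Rightarrow> (bool \<times> nat) set" where
  "KV n = {(False, i) | i. i < n}"

definition KW :: "nat \<Rightarrow> (bool \<times> nat) set" where
  "KW n = {(True, i) | i. i < n}"

definition Kvert :: "nat \<Rightarrow> (bool \<times> nat) set" where
  "Kvert n = KV n \<union> KW n"

definition Kadj :: "nat \<Rightarrow> bool \<times> nat \<Rightarrow> bool \<times> nat \<Rightarrow> bool" where
  "Kadj n x y \<longleftrightarrow> (x \<in> KV n \<and> y \<in> KW n) \<or> (x \<in> KW n \<and> y \<in> KV n)"

definition Knn_aut :: "nat \<Rightarrow> (bool \<times> nat \<Rightarrow> bool \<times> nat) set" where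
  "Knn_aut n = {g. g permutes Kvert n \<and>
      (\<forall>x\<in>Kvert n. \<forall>y\<in>Kvert n. Kadj n (g x) (g y) \<longleftrightarrow> Kadj n x y)}"

definition Knn_aut_group :: "nat \<Rightarrow> (bool \<times> nat \<Rightarrow> bool \<times> nat) monoid" where
  "Knn_aut_group n = \<lparr>carrier = Knn_aut n, mult = (\<circ>), one = id\<rparr>"

definition SO4 :: "(real^4^4) monoid" where
  "SO4 = \<lparr>carrier = {A. orthogonal_matrix A \<and> det A = 1}, mult = (**), one = mat 1\<rparr>"

definition Knn_embedding ::
  "nat \<Rightarrow> (bool \<times> nat \<Rightarrow> real^4) \<Rightarrow> (bool \<times> nat \<Rightarrow> bool \<times> nat \<Rightarrow> real \<Rightarrow> real^4) \<Rightarrow> bool" where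
  "Knn_embedding n pos edge \<longleftrightarrow>
     inj_on pos (Kvert n) \<and> pos ` Kvert n \<subseteq> sphere 0 1 \<and>
     (\<forall>x\<in>KV n. \<forall>y\<in>KW n.
        arc (edge x y) \<and> pathstart (edge x y) = pos x \<and> pathfinish (edge x y) = pos y \<and>
        path_image (edge x y) \<subseteq> sphere 0 1 \<and>
        (\<forall>z\<in>Kvert n. pos z \<in> path_image (edge x y) \<longrightarrow> z = x \<or> z = y)) \<and>
     (\<forall>x\<in>KV n. \<forall>y\<in>KW n. \<forall>x'\<in>KV n. \<forall>y'\<in>KW n. (x, y) \<noteq> (x', y') \<longrightarrow>
        path_image (edge x y) \<inter> path_image (edge x' y') \<subseteq> pos ` ({x, y} \<inter> {x', y'}))"

definition edge_img ::
  "nat \<Rightarrow> (bool \<times> nat \<Rightarrow> bool \<times> nat \<Rightarrow> real \<Rightarrow> real^4) \<Rightarrow> bool \<times> nat \<Rightarrow> bool \<times> nat \<Rightarrow> (real^4) set" where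
  "edge_img n edge x y = (if x \<in> KV n then path_image (edge x y) else path_image (edge y x))"

definition Knn_image ::
  "nat \<Rightarrow> (bool \<times> nat \<Rightarrow> real^4) \<Rightarrow> (bool \<times> nat \<Rightarrow> bool \<times> nat \<Rightarrow> real \<Rightarrow> real^4) \<Rightarrow> (real^4) set" where
  "Knn_image n pos edge = pos ` Kvert n \<union> (\<Union>x\<in>KV n. \<Union>y\<in>KW n. path_image (edge x y))"

definition induces ::
  "nat \<Rightarrow> (bool \<times> nat \<Rightarrow> real^4) \<Rightarrow> (bool \<times> nat \<Rightarrow> bool \<times> nat \<Rightarrow> real \<Rightarrow> real^4) \<Rightarrow>
   real^4^4 \<Rightarrow> (bool \<times> nat \<Rightarrow> bool \<times> nat) \<Rightarrow> bool" where
  "induces n pos edge A g \<longleftrightarrow>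
     (\<lambda>p. A *v p) ` Knn_image n pos edge = Knn_image n pos edge \<and>
     (\<forall>v\<in>Kvert n. A *v pos v = pos (g v)) \<and>
     (\<forall>x\<in>Kvert n. \<forall>y\<in>Kvert n. Kadj n x y \<longrightarrow>
        (\<lambda>p. A *v p) ` edge_img n edge x y = edge_img n edge (g x) (g y))"

end

theory Submission
  imports Defs
begin


lemma ext4:
  fixes x f :: "nat \<Rightarrow> nat"
  assumes "x permutes {1..4}" "f permutes {1..4}"
    "x 1 = f 1" "x 2 = f 2" "x 3 = f 3" "x 4 = f 4"
  shows "x = f"
proof
  fix k
  show "x k = f k"
  proof (cases "k \<in> {1..4}")
    case True
    then have "k = 1 \<or> k = 2 \<or> k = 3 \<or> k = 4" by auto
    then show ?thesis using assms by auto
  next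
    case False
    then show ?thesis using assms permutes_not_in by metis
  qed
qed

abbreviation tr :: "nat \<Rightarrow> nat \<Rightarrow> nat \<Rightarrow> nat" where "tr \<equiv> Transposition.transpose"

lemma tr_perm: "a \<in> {1..4} \<Longrightarrow> b \<in> {1..4} \<Longrightarrow> tr a b permutes {1..(4::nat)}"
  by (rule permutes_swap_id)

lemma tr2_perm: "a \<in> {1..4} \<Longrightarrow> b \<in> {1..4} \<Longrightarrow> c \<in> {1..4} \<Longrightarrow> d \<in> {1..4} \<Longrightarrow>
   (tr a b \<circ> tr c d) permutes {1..(4::nat)}"
  by (intro permutes_compose permutes_swap_id)

lemma tr2_even: "a \<noteq> b \<Longrightarrow> c \<noteq> d \<Longrightarrow> evenperm (tr a b \<circ> tr c d)"
  by (simp add: evenperm_comp permutation_swap_id evenperm_swap)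

lemma classify_inv4:
  fixes x :: "nat \<Rightarrow> nat"
  assumes xp: "x permutes {1..4}" and xx: "x \<circ> x = id"
  shows "x = id \<or> x = tr 1 2 \<or> x = tr 1 3 \<or> x = tr 1 4 \<or> x = tr 2 3 \<or> x = tr 2 4 \<or> x = tr 3 4
    \<or> x = tr 1 2 \<circ> tr 3 4 \<or> x = tr 1 3 \<circ> tr 2 4 \<or> x = tr 1 4 \<circ> tr 2 3"
proof -
  have inv: "x (x i) = i" for i using xx by (metis comp_apply id_apply)
  have r: "x i \<in> {1..4}" if "i \<in> {1..4}" for i using permutes_in_image[OF xp] that by blast
  have r1: "x 1 = 1 \<or> x 1 = 2 \<or> x 1 = 3 \<or> x 1 = 4" using r[of 1] by auto
  have r2: "x 2 = 1 \<or> x 2 = 2 \<or> x 2 = 3 \<or> x 2 = 4" using r[of 2] by auto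
  have r3: "x 3 = 1 \<or> x 3 = 2 \<or> x 3 = 3 \<or> x 3 = 4" using r[of 3] by auto
  have r4: "x 4 = 1 \<or> x 4 = 2 \<or> x 4 = 3 \<or> x 4 = 4" using r[of 4] by auto
  have E: "x = f" if "f permutes {1..4}" "x 1 = f 1" "x 2 = f 2" "x 3 = f 3" "x 4 = f 4" for f
    using ext4[OF xp that] .
  have P: "tr a b permutes {1..4}" "(tr a b \<circ> tr c d) permutes {1..4}"
    if "a \<in> {1..4}" "b \<in> {1..4}" "c \<in> {1..4}" "d \<in> {1..4}" for a b c d
    using that tr_perm tr2_perm by auto
  have Pid: "id permutes {1..(4::nat)}" by (rule permutes_id)
  note ins = inv[of 1] inv[of 2] inv[of 3] inv[of 4]
  have V: "(x 1 = 2 \<and> x 2 = 1 \<and> x 3 = 3 \<and> x 4 = 4) \<or> (x 1 = 2 \<and> x 2 = 1 \<and> x 3 = 4 \<and> x 4 = 3) \<or> (x 1 = 3 \<and> x 2 = 4 \<and> x 3 = 1 \<and> x 4 = 2) \<or> (x 1 = 3 \<and> x 2 = 2 \<and> x 3 = 1 \<and> x 4 = 4) \<or> (x 1 = 4 \<and> x 2 = 2 \<and> x 3 = 3 \<and> x 4 = 1) \<or> (x 1 = 4 \<and> x 2 = 3 \<and> x 3 = 2 \<and> x 4 = 1) \<or> (x 1 = 1 \<and> x 2 = 2 \<and> x 3 = 3 \<and> x 4 = 4) \<or> (x 1 = 1 \<and> x 2 = 2 \<and> x 3 = 4 \<and> x 4 = 3) \<or> (x 1 = 1 \<and> x 2 =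 3 \<and> x 3 = 2 \<and> x 4 = 4) \<or> (x 1 = 1 \<and> x 2 = 4 \<and> x 3 = 3 \<and> x 4 = 2)"
    using r1 r2 r3 r4 ins by (elim disjE) simp_all
  have L0: "x = tr 1 2" if c: "x 1 = 2" "x 2 = 1" "x 3 = 3" "x 4 = 4"
    by (rule E) (use c in \<open>simp_all add: transpose_def permutes_swap_id permutes_compose permutes_id\<close>)
  have L1: "x = tr 1 2 \<circ> tr 3 4" if c: "x 1 = 2" "x 2 = 1" "x 3 = 4" "x 4 = 3"
    by (rule E) (use c in \<open>simp_all add: transpose_def permutes_swap_id permutes_compose permutes_id\<close>)
  have L2: "x = tr 1 3 \<circ> tr 2 4" if c: "x 1 = 3" "x 2 = 4" "x 3 = 1" "x 4 = 2"
    by (rule E) (use c in \<open>simp_all add: transpose_def permutes_swap_id permutes_compose permutes_id\<close>)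
  have L3: "x = tr 1 3" if c: "x 1 = 3" "x 2 = 2" "x 3 = 1" "x 4 = 4"
    by (rule E) (use c in \<open>simp_all add: transpose_def permutes_swap_id permutes_compose permutes_id\<close>)
  have L4: "x = tr 1 4" if c: "x 1 = 4" "x 2 = 2" "x 3 = 3" "x 4 = 1"
    by (rule E) (use c in \<open>simp_all add: transpose_def permutes_swap_id permutes_compose permutes_id\<close>)
  have L5: "x = tr 1 4 \<circ> tr 2 3" if c: "x 1 = 4" "x 2 = 3" "x 3 = 2" "x 4 = 1"
    by (rule E) (use c in \<open>simp_all add: transpose_def permutes_swap_id permutes_compose permutes_id\<close>)
  have L6: "x = id" if c: "x 1 = 1" "x 2 = 2" "x 3 = 3" "x 4 = 4"
    by (rule E) (use c in \<open>simp_all add: transpose_def permutes_swap_id permutes_compose permutes_id\<close>)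
  have L7: "x = tr 3 4" if c: "x 1 = 1" "x 2 = 2" "x 3 = 4" "x 4 = 3"
    by (rule E) (use c in \<open>simp_all add: transpose_def permutes_swap_id permutes_compose permutes_id\<close>)
  have L8: "x = tr 2 3" if c: "x 1 = 1" "x 2 = 3" "x 3 = 2" "x 4 = 4"
    by (rule E) (use c in \<open>simp_all add: transpose_def permutes_swap_id permutes_compose permutes_id\<close>)
  have L9: "x = tr 2 4" if c: "x 1 = 1" "x 2 = 4" "x 3 = 3" "x 4 = 2"
    by (rule E) (use c in \<open>simp_all add: transpose_def permutes_swap_id permutes_compose permutes_id\<close>)
  show ?thesis
    using V
    apply (elim disjE conjE)
    subgoal premises p using L0[OF p] by simp
    subgoal premises p using L1[OF p] by simp
    subgoal premises p using L2[OF p] by simp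
    subgoal premises p using L3[OF p] by simp
    subgoal premises p using L4[OF p] by simp
    subgoal premises p using L5[OF p] by simp
    subgoal premises p using L6[OF p] by simp
    subgoal premises p using L7[OF p] by simp
    subgoal premises p using L8[OF p] by simp
    subgoal premises p using L9[OF p] by simp
    done
qed


lemma ne_at1: "(f::nat\<Rightarrow>nat) 1 \<noteq> g 1 \<Longrightarrow> f \<noteq> g" by auto

lemma alt4_carrier: "p \<in> carrier (alt_group 4) \<longleftrightarrow> p permutes {1..4} \<and> evenperm p"
  by (simp add: alt_group_def sym_group_def)

lemma A4_partner:
  assumes xc: "x \<in> carrier (alt_group 4)" and x1: "x \<noteq> id" and xx: "x \<circ> x = id"
  shows "\<exists>y a b. y \<in> carrier (alt_group 4) \<and> a \<in> carrier (alt_group 4) \<and> b \<in> carrier (alt_group 4)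
    \<and> y \<noteq> id \<and> y \<noteq> x \<and> y \<circ> y = id \<and> x \<circ> y = y \<circ> x \<and> y = a \<circ> b
    \<and> a \<circ> a \<circ> a = id \<and> b \<circ> b \<circ> b = id"
proof -
  have xp: "x permutes {1..4}" and xe: "evenperm x" using xc by (auto simp: alt4_carrier)
  have C: "(tr a b \<circ> tr c d) \<in> carrier (alt_group 4)"
    if "a \<in> {1..4}" "b \<in> {1..4}" "c \<in> {1..4}" "d \<in> {1..4}" "a \<noteq> b" "c \<noteq> d" for a b c d
    using that tr2_perm tr2_even by (auto simp: alt4_carrier)
  note X = classify_inv4[OF xp xx]
  have nt: "x \<noteq> tr a b" if "a \<noteq> b" for a b using xe that evenperm_swap by metis
  have ncase: "x = tr 1 2 \<circ> tr 3 4 \<or> x = tr 1 3 \<circ> tr 2 4 \<or> x = tr 1 4 \<circ> tr 2 3"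
    using X x1 nt[of 1 2] nt[of 1 3] nt[of 1 4] nt[of 2 3] nt[of 2 4] nt[of 3 4] by auto
  have PP: "(tr a b \<circ> tr c d) permutes {1..4}"
    if "a \<in> {1..4}" "b \<in> {1..4}" "c \<in> {1..4}" "d \<in> {1..4}" for a b c d
    using that tr2_perm by auto
  let ?a = "tr 1 2 \<circ> tr 1 3"
  have a3: "?a \<circ> ?a \<circ> ?a = id"
    by (rule ext4) (simp_all add: transpose_def permutes_swap_id permutes_compose permutes_id)
  have aC: "?a \<in> carrier (alt_group 4)" by (rule C) auto
  consider "x = tr 1 2 \<circ> tr 3 4" | "x = tr 1 3 \<circ> tr 2 4" | "x = tr 1 4 \<circ> tr 2 3"
    using ncase by blast
  then show ?thesis
  proof cases
    case 1
    let ?y = "tr 1 3 \<circ> tr 2 4" and ?b = "tr 2 3 \<circ> tr 2 4"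
    have "?y \<in> carrier (alt_group 4)" "?b \<in> carrier (alt_group 4)" by (rule C; simp)+
    moreover have "?y \<noteq> id" "?y \<noteq> x" using 1 by (intro ne_at1; simp add: transpose_def)+
    moreover have "?y \<circ> ?y = id" "x \<circ> ?y = ?y \<circ> x" "?y = ?a \<circ> ?b" "?b \<circ> ?b \<circ> ?b = id"
      unfolding 1
      by (rule ext4; simp_all add: transpose_def permutes_swap_id permutes_compose permutes_id)+
    ultimately show ?thesis using a3 aC by blast
  next
    case 2
    let ?y = "tr 1 2 \<circ> tr 3 4" and ?b = "tr 1 3 \<circ> tr 3 4"
    have "?y \<in> carrier (alt_group 4)" "?b \<in> carrier (alt_group 4)" by (rule C; simp)+
    moreover have "?y \<noteq> id" "?y \<noteq> x" using 2 by (intro ne_at1; simp add: transpose_def)+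
    moreover have "?y \<circ> ?y = id" "x \<circ> ?y = ?y \<circ> x" "?y = ?a \<circ> ?b" "?b \<circ> ?b \<circ> ?b = id"
      unfolding 2
      by (rule ext4; simp_all add: transpose_def permutes_swap_id permutes_compose permutes_id)+
    ultimately show ?thesis using a3 aC by blast
  next
    case 3
    let ?y = "tr 1 2 \<circ> tr 3 4" and ?b = "tr 1 3 \<circ> tr 3 4"
    have "?y \<in> carrier (alt_group 4)" "?b \<in> carrier (alt_group 4)" by (rule C; simp)+
    moreover have "?y \<noteq> id" "?y \<noteq> x" using 3 by (intro ne_at1; simp add: transpose_def)+
    moreover have "?y \<circ> ?y = id" "x \<circ> ?y = ?y \<circ> x" "?y = ?a \<circ> ?b" "?b \<circ> ?b \<circ> ?b = id"
      unfolding 3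
      by (rule ext4; simp_all add: transpose_def permutes_swap_id permutes_compose permutes_id)+
    ultimately show ?thesis using a3 aC by blast
  qed
qed

lemma det_eigenbasis:
  fixes A :: "real^'n^'n" and c :: "'n \<Rightarrow> real^'n" and d :: "'n \<Rightarrow> real"
  assumes eig: "\<And>j. A *v c j = d j *\<^sub>R c j" and nz: "\<And>j. c j \<noteq> 0"
    and orth: "\<And>i j. i \<noteq> j \<Longrightarrow> c i \<bullet> c j = 0"
  shows "det A = prod d UNIV"
proof -
  define M :: "real^'n^'n" where "M = (\<chi> i j. c j $ i)"
  define D :: "real^'n^'n" where "D = (\<chi> i j. if i = j then d i else 0)"
  have "(A ** M) $ i $ j = (M ** D) $ i $ j" for i j
  proof -
    have "(A ** M) $ i $ j = (A *v c j) $ i"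
      by (simp add: M_def matrix_matrix_mult_def matrix_vector_mult_def)
    also have "\<dots> = d j * c j $ i" by (simp add: eig)
    also have "\<dots> = (M ** D) $ i $ j"
      by (simp add: M_def D_def matrix_matrix_mult_def if_distrib sum.delta' cong: if_cong)
    finally show ?thesis .
  qed
  then have AM: "A ** M = M ** D" by (simp add: vec_eq_iff)
  have "(transpose M ** M) $ i $ j = (if i = j then c i \<bullet> c i else 0)" for i j
  proof -
    have "(transpose M ** M) $ i $ j = c i \<bullet> c j"
      by (simp add: M_def matrix_matrix_mult_def transpose_def inner_vec_def)
    then show ?thesis using orth by auto
  qed
  then have "det (transpose M ** M) = prod (\<lambda>i. c i \<bullet> c i) UNIV"
    by (subst det_diagonal) auto
  moreover have "prod (\<lambda>i. c i \<bullet> c i) UNIV \<noteq> 0"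
    using nz by (simp add: prod_zero_iff)
  ultimately have "det M \<noteq> 0" by (metis det_mul det_transpose mult_zero_left)
  moreover have "det A * det M = det M * det D"
    using AM by (metis det_mul)
  ultimately have "det A = det D" by simp
  also have "det D = prod d UNIV"
    by (subst det_diagonal) (auto simp: D_def)
  finally show ?thesis .
qed

lemma orth_inner:
  fixes A :: "real^'n^'n"
  assumes "orthogonal_matrix A"
  shows "(A *v a) \<bullet> (A *v b) = a \<bullet> b"
proof -
  have "orthogonal_transformation ((*v) A)"
    using assms orthogonal_transformation_matrix matrix_vector_mul_linear matrix_of_matrix_vector_mul
    by metis
  then show ?thesis by (simp add: orthogonal_transformation_def)
qed

lemma SO4_inv_fix_plane:
  fixes A :: "real^4^4"
  assumes orth: "orthogonal_matrix A" and dt: "det A = 1" and inv: "A ** A = mat 1"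
    and ne: "A \<noteq> mat 1"
    and fp: "A *v p = p" and fr: "A *v r = r" and p0: "p \<noteq> 0" and r0: "r \<noteq> 0"
    and pr: "p \<bullet> r = 0" and xp: "x \<bullet> p = 0" and xr: "x \<bullet> r = 0"
  shows "A *v x = - x"
proof (rule ccontr)
  assume nx: "A *v x \<noteq> - x"
  have AA: "A *v (A *v u) = u" for u
    by (simp add: matrix_vector_mul_assoc inv)
  define y where "y = x + A *v x"
  have y0: "y \<noteq> 0" using nx unfolding y_def by (metis add.commute add_eq_0_iff)
  have Ay: "A *v y = y"
    by (simp add: y_def matrix_vector_right_distrib AA)
  have fix_orth: "(A *v u) \<bullet> f = u \<bullet> f" if "A *v f = f" for u f
    using orth_inner[OF orth, of u f] that by simp
  have yp: "y \<bullet> p = 0"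
    using fix_orth[OF fp, of x] xp by (simp add: y_def inner_add_left)
  have yr: "y \<bullet> r = 0"
    using fix_orth[OF fr, of x] xr by (simp add: y_def inner_add_left)
  obtain z0 where z0: "A *v z0 \<noteq> z0"
    using ne by (metis matrix_eq matrix_vector_mul_lid)
  define z where "z = z0 - A *v z0"
  have z0': "z \<noteq> 0" using z0 by (simp add: z_def)
  have Az: "A *v z = - z"
    by (simp add: z_def matrix_vector_mult_diff_distrib AA)
  have zf: "z \<bullet> f = 0" if "A *v f = f" for f
    using fix_orth[OF that, of z] by (simp add: Az)
  have zp: "z \<bullet> p = 0" and zr: "z \<bullet> r = 0" and zy: "z \<bullet> y = 0"
    using zf fp fr Ay by auto
  define c :: "4 \<Rightarrow> real^4" where
    "c = (\<lambda>i. if i = 1 then p else if i = 2 then r else if i = 3 then y else z)"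
  define d :: "4 \<Rightarrow> real" where "d = (\<lambda>i. if i = 4 then -1 else 1)"
  have "det A = prod d UNIV"
  proof (rule det_eigenbasis)
    fix j :: 4
    show "A *v c j = d j *\<^sub>R c j"
      using exhaust_4[of j] by (auto simp: c_def d_def fp fr Ay Az)
    show "c j \<noteq> 0"
      using exhaust_4[of j] by (auto simp: c_def p0 r0 y0 z0')
  next
    fix i j :: 4
    assume "i \<noteq> j"
    then show "c i \<bullet> c j = 0"
      using exhaust_4[of j] exhaust_4[of i] pr yp yr zp zr zy
      by (auto simp: c_def inner_commute)
  qed
  also have "\<dots> = d 4 * prod d (UNIV - {4})"
    by (simp add: prod.remove)
  also have "prod d (UNIV - {4}) = 1"
    by (rule prod.neutral) (simp add: d_def)
  also have "d 4 = -1" by (simp add: d_def)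
  finally show False using dt by simp
qed

lemma SO4_two_inv_eq:
  fixes A B :: "real^4^4"
  assumes "orthogonal_matrix A" "det A = 1" "A ** A = mat 1" "A \<noteq> mat 1"
    "A *v p = p" "A *v r = r"
    and "orthogonal_matrix B" "det B = 1" "B ** B = mat 1" "B \<noteq> mat 1"
    "B *v p = p" "B *v r = r"
    and p0: "p \<noteq> 0" and r0: "r \<noteq> 0" and pr: "p \<bullet> r = 0"
  shows "A = B"
proof -
  have "A *v x = B *v x" for x
  proof -
    define a where "a = (x \<bullet> p) / (p \<bullet> p)"
    define b where "b = (x \<bullet> r) / (r \<bullet> r)"
    define x' where "x' = x - a *\<^sub>R p - b *\<^sub>R r"
    have pp: "p \<bullet> p \<noteq> 0" using p0 by simp
    have rr: "r \<bullet> r \<noteq> 0" using r0 by simp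
    have rp: "r \<bullet> p = 0" using pr by (simp add: inner_commute)
    have "x' \<bullet> p = x \<bullet> p - a * (p \<bullet> p) - b * (r \<bullet> p)"
      by (simp add: x'_def inner_diff_left)
    then have x'p: "x' \<bullet> p = 0" using pp rp by (simp add: a_def)
    have "x' \<bullet> r = x \<bullet> r - a * (p \<bullet> r) - b * (r \<bullet> r)"
      by (simp add: x'_def inner_diff_left)
    then have x'r: "x' \<bullet> r = 0" using rr pr by (simp add: b_def)
    have xe: "x = x' + a *\<^sub>R p + b *\<^sub>R r" by (simp add: x'_def)
    have "A *v x' = - x'"
      by (rule SO4_inv_fix_plane[of A p r]) (use assms x'p x'r in auto)
    moreover have "B *v x' = - x'"
      by (rule SO4_inv_fix_plane[of B p r]) (use assms x'p x'r in auto)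
    ultimately show ?thesis
      using assms by (simp add: xe matrix_vector_right_distrib matrix_vector_mult_scaleR)
  qed
  then show ?thesis by (simp add: matrix_eq)
qed

lemma arc_involution_fix:
  fixes g :: "real \<Rightarrow> real^4" and T :: "real^4 \<Rightarrow> real^4"
  assumes arc: "arc g" and contT: "continuous_on (path_image g) T"
    and img: "T ` path_image g \<subseteq> path_image g"
    and invo: "\<And>x. x \<in> path_image g \<Longrightarrow> T (T x) = x"
    and s: "T (pathstart g) = pathstart g" and f: "T (pathfinish g) = pathfinish g"
    and x: "x \<in> path_image g"
  shows "T x = x"
proof -
  obtain h where hom: "homeomorphism {0..1} (path_image g) g h"
    using homeomorphism_arc[OF arc] by blast
  have hg: "\<And>t. t \<in> {0..1} \<Longrightarrow> h (g t) = t"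
    and gh: "\<And>y. y \<in> path_image g \<Longrightarrow> g (h y) = y"
    and contg: "continuous_on {0..1} g" and conth: "continuous_on (path_image g) h"
    and himg: "h ` path_image g = {0..1}" and gimg: "g ` {0..1} = path_image g"
    using hom unfolding homeomorphism_def by auto
  define F where "F = h \<circ> T \<circ> g"
  have gin: "t \<in> {0..1} \<Longrightarrow> g t \<in> path_image g" for t using gimg by blast
  have Tin: "y \<in> path_image g \<Longrightarrow> T y \<in> path_image g" for y using img by blast
  have hin: "y \<in> path_image g \<Longrightarrow> h y \<in> {0..1}" for y using himg by blast
  have Fin: "t \<in> {0..1} \<Longrightarrow> F t \<in> {0..1}" for t
    unfolding F_def o_def by (intro hin Tin gin)
  have contF: "continuous_on {0..1} F"
    unfolding F_def
    by (intro continuous_on_compose contg continuous_on_subset[OF contT]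
          continuous_on_subset[OF conth]) (use gimg img in auto)
  have injF: "inj_on F {0..1}"
  proof
    fix s t assume st: "s \<in> {0..1}" "t \<in> {0..1}" "F s = F t"
    then have "g (h (T (g s))) = g (h (T (g t)))" by (simp add: F_def)
    then have "T (g s) = T (g t)" using st gh gin Tin by metis
    then have "T (T (g s)) = T (T (g t))" by simp
    then have "g s = g t" using invo gin st by metis
    then show "s = t" using hg st by metis
  qed
  have F0: "F 0 = 0"
    using s hg[of 0] by (simp add: F_def pathstart_def)
  have F1: "F 1 = 1"
    using f hg[of 1] by (simp add: F_def pathfinish_def)
  have FF: "F (F t) = t" if "t \<in> {0..1}" for t
  proof -
    have "F (F t) = h (T (g (h (T (g t)))))" by (simp add: F_def)
    also have "\<dots> = h (T (T (g t)))" using gh Tin gin that by simp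
    also have "\<dots> = t" using invo gin hg that by simp
    finally show ?thesis .
  qed
  have "strict_mono_on {0..1} F \<or> strict_antimono_on {0..1} F"
    using injective_eq_monotone_map[of "{0..1}" F] contF injF by (simp add: is_interval_cc)
  moreover have "\<not> strict_antimono_on {0..1} F"
  proof
    assume "strict_antimono_on {0..1} F"
    then have "F 1 < F 0" by (auto simp: monotone_on_def)
    then show False using F0 F1 by simp
  qed
  ultimately have mono: "strict_mono_on {0..1} F" by blast
  have Fid: "F t = t" if t: "t \<in> {0..1}" for t
  proof (rule ccontr)
    assume "F t \<noteq> t"
    then consider "F t < t" | "t < F t" by linarith
    then show False
    proof cases
      case 1
      then have "F (F t) < F t" using mono t Fin[OF t] by (auto simp: monotone_on_def)
      then show False using FF[OF t] 1 by simp
    next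
      case 2
      then have "F t < F (F t)" using mono t Fin[OF t] by (auto simp: monotone_on_def)
      then show False using FF[OF t] 2 by simp
    qed
  qed
  obtain t where t: "t \<in> {0..1}" "x = g t" using x gimg by blast
  have "h (T x) = t" using Fid[OF t(1)] t by (simp add: F_def)
  then have "g (h (T x)) = g t" by simp
  then show ?thesis using gh Tin x t by simp
qed




lemma KV_KW_disj: "x \<in> KV n \<Longrightarrow> x \<notin> KW n"
  by (auto simp: KV_def KW_def)

lemma Kvert_cases: "x \<in> Kvert n \<Longrightarrow> x \<in> KV n \<or> x \<in> KW n"
  by (simp add: Kvert_def)

lemma card_KV: "card (KV n) = n"
proof -
  have "KV n = (\<lambda>i. (False, i)) ` {..<n}" by (auto simp: KV_def)
  moreover have "inj_on (\<lambda>i. (False, i)) {..<n}" by (auto simp: inj_on_def)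
  ultimately show ?thesis by (simp add: card_image)
qed

lemma card_KW: "card (KW n) = n"
proof -
  have "KW n = (\<lambda>i. (True, i)) ` {..<n}" by (auto simp: KW_def)
  moreover have "inj_on (\<lambda>i. (True, i)) {..<n}" by (auto simp: inj_on_def)
  ultimately show ?thesis by (simp add: card_image)
qed

lemma finite_KW: "finite (KW n)" and finite_KV: "finite (KV n)"
proof -
  have "KW n = (\<lambda>i. (True, i)) ` {..<n}" "KV n = (\<lambda>i. (False, i)) ` {..<n}"
    by (auto simp: KW_def KV_def)
  then show "finite (KW n)" "finite (KV n)" by simp_all
qed

definition pres :: "nat \<Rightarrow> (bool \<times> nat \<Rightarrow> bool \<times> nat) \<Rightarrow> bool" where
  "pres n g \<longleftrightarrow> (\<forall>y\<in>KV n. g y \<in> KV n) \<and> (\<forall>y\<in>KW n. g y \<in> KW n)"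

lemma Knn_autD:
  assumes "g \<in> Knn_aut n"
  shows "g permutes Kvert n \<and> (\<forall>x\<in>Kvert n. \<forall>y\<in>Kvert n. Kadj n (g x) (g y) \<longleftrightarrow> Kadj n x y)"
  using assms unfolding Knn_aut_def by (rule CollectD)

lemma aut_in: "g \<in> Knn_aut n \<Longrightarrow> y \<in> Kvert n \<Longrightarrow> g y \<in> Kvert n"
  using Knn_autD permutes_in_image by metis

lemma aut_adj: assumes "g \<in> Knn_aut n" "x \<in> Kvert n" "y \<in> Kvert n"
  shows "Kadj n (g x) (g y) \<longleftrightarrow> Kadj n x y"
proof -
  have "\<forall>x\<in>Kvert n. \<forall>y\<in>Kvert n. Kadj n (g x) (g y) \<longleftrightarrow> Kadj n x y"
    using Knn_autD[OF assms(1)] by (rule conjunct2)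
  from bspec[OF bspec[OF this assms(2)] assms(3)] show ?thesis .
qed

lemma Kadj_iff: "x \<in> Kvert n \<Longrightarrow> y \<in> Kvert n \<Longrightarrow> Kadj n x y \<longleftrightarrow> (x \<in> KV n \<longleftrightarrow> y \<in> KW n)"
  using Kvert_cases[of x n] Kvert_cases[of y n] KV_KW_disj[of x n] KV_KW_disj[of y n]
  by (auto simp: Kadj_def)

lemma aut_side:
  assumes g: "g \<in> Knn_aut n" and x: "x \<in> KV n"
  shows "g x \<in> KV n \<Longrightarrow> pres n g"
    and "g x \<in> KW n \<Longrightarrow> (\<forall>y\<in>KV n. g y \<in> KW n) \<and> (\<forall>y\<in>KW n. g y \<in> KV n)"
proof -
  have xv: "x \<in> Kvert n" using x by (simp add: Kvert_def)
  have A: "(g x \<in> KV n \<longleftrightarrow> g y \<in> KW n) \<longleftrightarrow> (y \<in> KW n)" if yk: "y \<in> Kvert n" for y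
  proof -
    have 1: "Kadj n (g x) (g y) = Kadj n x y" by (rule aut_adj[OF g xv yk])
    have 2: "Kadj n (g x) (g y) = (g x \<in> KV n \<longleftrightarrow> g y \<in> KW n)"
      by (rule Kadj_iff[OF aut_in[OF g xv] aut_in[OF g yk]])
    have 3: "Kadj n x y = (x \<in> KV n \<longleftrightarrow> y \<in> KW n)" by (rule Kadj_iff[OF xv yk])
    from 1 2 3 x show ?thesis by argo
  qed
  have gy: "g y \<in> KV n \<or> g y \<in> KW n" if "y \<in> Kvert n" for y using Kvert_cases[OF aut_in[OF g that]] .
  have yV: "y \<in> Kvert n" "y \<notin> KW n" if "y \<in> KV n" for y using that KV_KW_disj[OF that] by (auto simp: Kvert_def)
  have yW: "y \<in> Kvert n" if "y \<in> KW n" for y using that by (auto simp: Kvert_def)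
  show "g x \<in> KV n \<Longrightarrow> pres n g" unfolding pres_def
  proof (intro conjI ballI)
    fix y assume gx: "g x \<in> KV n" and y: "y \<in> KV n"
    have "g y \<notin> KW n" using A[OF yV(1)[OF y]] yV(2)[OF y] gx by blast
    then show "g y \<in> KV n" using gy[OF yV(1)[OF y]] by blast
  next
    fix y assume gx: "g x \<in> KV n" and y: "y \<in> KW n"
    show "g y \<in> KW n" using A[OF yW[OF y]] y gx by blast
  qed
  show "g x \<in> KW n \<Longrightarrow> (\<forall>y\<in>KV n. g y \<in> KW n) \<and> (\<forall>y\<in>KW n. g y \<in> KV n)"
  proof (intro conjI ballI)
    fix y assume gx: "g x \<in> KW n" and y: "y \<in> KV n"
    have gx': "g x \<notin> KV n" using gx KV_KW_disj by blast
    show "g y \<in> KW n" using A[OF yV(1)[OF y]] yV(2)[OF y] gx' by blast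
  next
    fix y assume gx: "g x \<in> KW n" and y: "y \<in> KW n"
    have gx': "g x \<notin> KV n" using gx KV_KW_disj by blast
    have "g y \<notin> KW n" using A[OF yW[OF y]] y gx' by blast
    then show "g y \<in> KV n" using gy[OF yW[OF y]] by blast
  qed
qed

lemma order3_pres:
  assumes g: "g \<in> Knn_aut n" and g3: "g \<circ> g \<circ> g = id" and x: "x \<in> KV n"
  shows "pres n g"
proof -
  have "g x \<in> Kvert n" using aut_in[OF g] x by (simp add: Kvert_def)
  then consider "g x \<in> KV n" | "g x \<in> KW n" using Kvert_cases by blast
  then show ?thesis
  proof cases
    case 1 then show ?thesis using aut_side(1)[OF g x] by blast
  next
    case 2
    note sw = aut_side(2)[OF g x 2]
    have "g (g x) \<in> KV n" using sw 2 by blast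
    then have "g (g (g x)) \<in> KW n" using sw by blast
    moreover have "g (g (g x)) = x" using g3 by (metis comp_apply id_apply)
    ultimately have False using x KV_KW_disj by metis
    then show ?thesis ..
  qed
qed

lemma pres_comp: "pres n a \<Longrightarrow> pres n b \<Longrightarrow> pres n (a \<circ> b)"
  by (simp add: pres_def)

lemma even_card_inv:
  assumes "finite S" "\<And>x. x \<in> S \<Longrightarrow> f x \<in> S" "\<And>x. x \<in> S \<Longrightarrow> f (f x) = x"
    "\<And>x. x \<in> S \<Longrightarrow> f x \<noteq> x"
  shows "even (card S)"
  using assms
proof (induction "card S" arbitrary: S rule: less_induct)
  case less
  show ?case
  proof (cases "S = {}")
    case True then show ?thesis by simp
  next
    case False
    then obtain x where x: "x \<in> S" by blast
    define S' where "S' = S - {x, f x}"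
    have fx: "f x \<in> S" "f x \<noteq> x" using less.prems x by auto
    have sub: "{x, f x} \<subseteq> S" using x fx by auto
    have c2: "card {x, f x} = 2" using fx by simp
    have "card S' = card S - card {x, f x}"
      unfolding S'_def by (rule card_Diff_subset) (use sub in auto)
    moreover have "card {x, f x} \<le> card S" using card_mono[OF less.prems(1) sub] .
    ultimately have cS: "card S = card S' + 2" using c2 by simp
    have "even (card S')"
    proof (rule less.hyps)
      show "card S' < card S" using cS by simp
      show "finite S'" using less.prems(1) by (simp add: S'_def)
      fix y assume y: "y \<in> S'"
      then have yS: "y \<in> S" "y \<noteq> x" "y \<noteq> f x" by (auto simp: S'_def)
      have "f y \<noteq> x" using yS less.prems(3) by metis
      moreover have "f y \<noteq> f x" using yS less.prems(3) x by metis
      ultimately show "f y \<in> S'" using less.prems(2) yS by (auto simp: S'_def)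
      show "f (f y) = y" using less.prems(3) yS by auto
      show "f y \<noteq> y" using less.prems(4) yS by auto
    qed
    then show ?thesis using cS by simp
  qed
qed



lemma perm_idem:
  assumes "p permutes S" "p \<circ> p = p"
  shows "p = id"
proof
  fix k
  have "p (p k) = p k" using assms(2) by (metis comp_apply)
  then show "p k = id k" using permutes_inj[OF assms(1)] by (simp add: inj_eq)
qed


lemma embD1:
  assumes "Knn_embedding n pos edge"
  shows "inj_on pos (Kvert n)"
  using assms unfolding Knn_embedding_def by (rule conjunct1)

lemma embD2:
  assumes "Knn_embedding n pos edge"
  shows "pos ` Kvert n \<subseteq> sphere 0 1"
  using assms unfolding Knn_embedding_def by (rule conjunct1[OF conjunct2])

lemma embE:
  assumes "Knn_embedding n pos edge" "x \<in> KV n" "y \<in> KW n"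
  shows "arc (edge x y) \<and> pathstart (edge x y) = pos x \<and> pathfinish (edge x y) = pos y \<and>
        path_image (edge x y) \<subseteq> sphere 0 1"
proof -
  have "\<forall>x\<in>KV n. \<forall>y\<in>KW n.
        arc (edge x y) \<and> pathstart (edge x y) = pos x \<and> pathfinish (edge x y) = pos y \<and>
        path_image (edge x y) \<subseteq> sphere 0 1 \<and>
        (\<forall>z\<in>Kvert n. pos z \<in> path_image (edge x y) \<longrightarrow> z = x \<or> z = y)"
    using assms(1) unfolding Knn_embedding_def by (rule conjunct1[OF conjunct2[OF conjunct2]])
  from bspec[OF bspec[OF this assms(2)] assms(3)] show ?thesis by blast
qed

lemma indD:
  assumes "induces n pos edge A h"
  shows "\<forall>v\<in>Kvert n. A *v pos v = pos (h v)"
    "\<forall>x\<in>Kvert n. \<forall>y\<in>Kvert n. Kadj n x y \<longrightarrow>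
        (\<lambda>p. A *v p) ` edge_img n edge x y = edge_img n edge (h x) (h y)"
proof -
  have H: "(\<lambda>p. A *v p) ` Knn_image n pos edge = Knn_image n pos edge \<and>
     (\<forall>v\<in>Kvert n. A *v pos v = pos (h v)) \<and>
     (\<forall>x\<in>Kvert n. \<forall>y\<in>Kvert n. Kadj n x y \<longrightarrow>
        (\<lambda>p. A *v p) ` edge_img n edge x y = edge_img n edge (h x) (h y))"
    using assms unfolding induces_def by assumption
  show "\<forall>v\<in>Kvert n. A *v pos v = pos (h v)" using H by (rule conjunct1[OF conjunct2])
  show "\<forall>x\<in>Kvert n. \<forall>y\<in>Kvert n. Kadj n x y \<longrightarrow>
        (\<lambda>p. A *v p) ` edge_img n edge x y = edge_img n edge (h x) (h y)"
    using H by (rule conjunct2[OF conjunct2])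
qed

lemma geom_fix:
  assumes emb: "Knn_embedding n pos edge" and v: "v \<in> KV n" and w: "w \<in> KW n"
    and ind: "induces n pos edge A h" and hv: "h v = v" and hw: "h w = w"
    and inv: "A ** A = mat 1"
  shows "\<forall>x \<in> path_image (edge v w). A *v x = x"
proof
  fix x assume x: "x \<in> path_image (edge v w)"
  have vk: "v \<in> Kvert n" and wk: "w \<in> Kvert n" using v w by (auto simp: Kvert_def)
  have E: "arc (edge v w)" "pathstart (edge v w) = pos v" "pathfinish (edge v w) = pos w"
    using embE[OF emb v w] by blast+
  note Ap = indD(1)[OF ind] and Ae = indD(2)[OF ind]
  have adj: "Kadj n v w" using v w by (simp add: Kadj_def)
  have "(\<lambda>p. A *v p) ` edge_img n edge v w = edge_img n edge (h v) (h w)"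
    using bspec[OF bspec[OF Ae vk] wk] adj by blast
  then have "(\<lambda>p. A *v p) ` edge_img n edge v w = edge_img n edge v w"
    using hv hw by simp
  then have img: "(\<lambda>p. A *v p) ` path_image (edge v w) = path_image (edge v w)"
    using v by (simp add: edge_img_def)
  show "A *v x = x"
  proof (rule arc_involution_fix[OF E(1), where T = "(*v) A"])
    show "continuous_on (path_image (edge v w)) ((*v) A)"
      by (rule matrix_vector_mult_linear_continuous_on)
    show "(*v) A ` path_image (edge v w) \<subseteq> path_image (edge v w)" using img by simp
    show "A *v (A *v y) = y" for y by (simp add: matrix_vector_mul_assoc inv)
    show "A *v pathstart (edge v w) = pathstart (edge v w)" using E(2) Ap vk hv by simp
    show "A *v pathfinish (edge v w) = pathfinish (edge v w)" using E(3) Ap wk hw by simp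
    show "x \<in> path_image (edge v w)" by (rule x)
  qed
qed

lemma geom_main:
  assumes emb: "Knn_embedding n pos edge" and v: "v \<in> KV n" and w: "w \<in> KW n"
    and indA: "induces n pos edge A h" and hv: "h v = v" and hw: "h w = w"
    and A: "orthogonal_matrix A" "det A = 1" "A ** A = mat 1" "A \<noteq> mat 1"
    and indB: "induces n pos edge B k" and kv: "k v = v" and kw: "k w = w"
    and B: "orthogonal_matrix B" "det B = 1" "B ** B = mat 1" "B \<noteq> mat 1"
  shows "A = B"
proof -
  have vk: "v \<in> Kvert n" and wk: "w \<in> Kvert n" using v w by (auto simp: Kvert_def)
  have E: "arc (edge v w)" "pathstart (edge v w) = pos v" "pathfinish (edge v w) = pos w"
     "path_image (edge v w) \<subseteq> sphere 0 1"
    using embE[OF emb v w] by blast+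
  note injpos = embD1[OF emb] and sph = embD2[OF emb]
  define p where "p = pos v"
  define q where "q = pos w"
  have vw: "v \<noteq> w" using v w KV_KW_disj by blast
  have pq: "p \<noteq> q" using injpos vk wk vw by (auto simp: p_def q_def inj_on_def)
  have np: "norm p = 1" using sph vk by (auto simp: p_def)
  have FA: "\<forall>x \<in> path_image (edge v w). A *v x = x"
    by (rule geom_fix[OF emb v w indA hv hw A(3)])
  have FB: "\<forall>x \<in> path_image (edge v w). B *v x = x"
    by (rule geom_fix[OF emb v w indB kv kw B(3)])
  have p_in: "p \<in> path_image (edge v w)" using E(2) pathstart_in_path_image p_def by metis
  have q_in: "q \<in> path_image (edge v w)" using E(3) pathfinish_in_path_image q_def by metis
  define m where "m = edge v w (1/2)"
  have m_in: "m \<in> path_image (edge v w)" by (auto simp: m_def path_image_def)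
  have mp: "m \<noteq> p"
  proof
    assume "m = p"
    then have "edge v w (1/2) = edge v w 0" using E(2) by (simp add: m_def p_def pathstart_def)
    then show False using arcD[OF E(1)] by fastforce
  qed
  have mq: "m \<noteq> q"
  proof
    assume "m = q"
    then have "edge v w (1/2) = edge v w 1" using E(3) by (simp add: m_def q_def pathfinish_def)
    then show False using arcD[OF E(1)] by fastforce
  qed
  define r0 where "r0 = (if m = - p then q else m)"
  have r0_in: "r0 \<in> path_image (edge v w)" using m_in q_in by (simp add: r0_def)
  have r0p: "r0 \<noteq> p" using mp pq by (simp add: r0_def)
  have r0mp: "r0 \<noteq> - p" using mq by (auto simp: r0_def)
  have nr0: "norm r0 = 1" using E(4) r0_in by auto
  define r where "r = r0 - (p \<bullet> r0) *\<^sub>R p"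
  have pp: "p \<bullet> p = 1" using np by (simp add: norm_eq_1)
  have pr: "p \<bullet> r = 0" by (simp add: r_def inner_diff_right pp)
  have p0: "p \<noteq> 0" using np by auto
  have r0': "r \<noteq> 0"
  proof
    assume "r = 0"
    then have req: "r0 = (p \<bullet> r0) *\<^sub>R p" by (simp add: r_def)
    then have "norm r0 = \<bar>p \<bullet> r0\<bar>" using np by (metis mult.right_neutral norm_scaleR real_norm_def)
    then have "\<bar>p \<bullet> r0\<bar> = 1" using nr0 by simp
    then have "p \<bullet> r0 = 1 \<or> p \<bullet> r0 = -1" by linarith
    then show False using req r0p r0mp by auto
  qed
  have Ap: "A *v p = p" using FA p_in by blast
  have Bp: "B *v p = p" using FB p_in by blast
  have Ar0: "A *v r0 = r0" using FA r0_in by blast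
  have Br0: "B *v r0 = r0" using FB r0_in by blast
  have Ar: "A *v r = r" by (simp add: r_def matrix_vector_mult_diff_distrib matrix_vector_mult_scaleR Ap Ar0)
  have Br: "B *v r = r" by (simp add: r_def matrix_vector_mult_diff_distrib matrix_vector_mult_scaleR Bp Br0)
  show ?thesis
    by (rule SO4_two_inv_eq[of A p r B]) (use A B Ap Ar Bp Br p0 r0' pr in auto)
qed


theorem lemma2:
  fixes n :: nat
    and G :: "(bool \<times> nat \<Rightarrow> bool \<times> nat) set"
    and Ghat :: "(real^4^4) set"
    and pos :: "bool \<times> nat \<Rightarrow> real^4"
    and edge :: "bool \<times> nat \<Rightarrow> bool \<times> nat \<Rightarrow> real \<Rightarrow> real^4"
    and \<phi> :: "real^4^4 \<Rightarrow> (bool \<times> nat \<Rightarrow> bool \<times> nat)"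
  assumes G_sub: "subgroup G (Knn_aut_group n)"
    and G_A4: "(Knn_aut_group n)\<lparr>carrier := G\<rparr> \<cong> alt_group 4"
    and emb: "Knn_embedding n pos edge"
    and Ghat_sub: "subgroup Ghat SO4"
    and \<phi>_iso: "\<phi> \<in> iso (SO4\<lparr>carrier := Ghat\<rparr>) ((Knn_aut_group n)\<lparr>carrier := G\<rparr>)"
    and induced: "\<forall>A\<in>Ghat. induces n pos edge A (\<phi> A)"
  shows "\<forall>g\<in>G. g \<noteq> id \<and> g \<circ> g = id \<longrightarrow> card {v \<in> KV n. g v = v} \<noteq> 1"
proof (intro ballI impI)
  fix g assume gG: "g \<in> G" and gc: "g \<noteq> id \<and> g \<circ> g = id"
  have gne: "g \<noteq> id" and gg: "g \<circ> g = id" using gc by auto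
  show "card {v \<in> KV n. g v = v} \<noteq> 1"
  proof
    assume "card {v \<in> KV n. g v = v} = 1"
    then obtain v where fixv: "{v \<in> KV n. g v = v} = {v}" by (rule card_1_singletonE)
    have vV: "v \<in> KV n" and gv: "g v = v" using fixv by auto
    have fixonly: "\<And>u. u \<in> KV n \<Longrightarrow> g u = u \<Longrightarrow> u = v" using fixv by auto
    have gi: "\<And>u. g (g u) = u" using gg by (metis comp_apply id_apply)
    have Gsub: "G \<subseteq> Knn_aut n" using subgroup.subset[OF G_sub] by (simp add: Knn_aut_group_def)
    have Gcomp: "\<And>a b. a \<in> G \<Longrightarrow> b \<in> G \<Longrightarrow> a \<circ> b \<in> G"
      using subgroup.m_closed[OF G_sub] by (simp add: Knn_aut_group_def)
    have Gid: "id \<in> G" using subgroup.one_closed[OF G_sub] by (simp add: Knn_aut_group_def)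
    have Gperm: "\<And>a. a \<in> G \<Longrightarrow> a permutes Kvert n"
      using Gsub Knn_autD by blast
    obtain f where f: "f \<in> iso ((Knn_aut_group n)\<lparr>carrier := G\<rparr>) (alt_group 4)"
      using G_A4 by (auto simp: is_iso_def)
    have fhom: "\<And>a b. a \<in> G \<Longrightarrow> b \<in> G \<Longrightarrow> f (a \<circ> b) = f a \<circ> f b"
      using f by (simp add: iso_def hom_def Knn_aut_group_def alt_group_def sym_group_def)
    have fbij: "bij_betw f G (carrier (alt_group 4))" using f by (simp add: iso_def)
    have finj: "\<And>a b. a \<in> G \<Longrightarrow> b \<in> G \<Longrightarrow> f a = f b \<Longrightarrow> a = b"
      using fbij by (auto simp: bij_betw_def inj_on_def)
    have fin: "\<And>a. a \<in> G \<Longrightarrow> f a \<in> carrier (alt_group 4)" using fbij bij_betwE by blast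
    have fsurj: "\<And>y. y \<in> carrier (alt_group 4) \<Longrightarrow> \<exists>a\<in>G. f a = y"
      using fbij unfolding bij_betw_def by (metis imageE)
    have fid: "f id = id"
    proof (rule perm_idem)
      show "f id permutes {1..4}" using fin[OF Gid] by (simp add: alt4_carrier)
      show "f id \<circ> f id = f id" using fhom[OF Gid Gid] by simp
    qed
    define x where "x = f g"
    have xc: "x \<in> carrier (alt_group 4)" using fin[OF gG] by (simp add: x_def)
    have xne: "x \<noteq> id" using finj[OF gG Gid] gne fid by (auto simp: x_def)
    have xx: "x \<circ> x = id" using fhom[OF gG gG] gg fid by (simp add: x_def)
    obtain y a b where yab: "y \<in> carrier (alt_group 4)" "a \<in> carrier (alt_group 4)" "b \<in> carrier (alt_group 4)"
      "y \<noteq> id" "y \<noteq> x" "y \<circ> y = id" "x \<circ> y = y \<circ> x" "y = a \<circ> b"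
      "a \<circ> a \<circ> a = id" "b \<circ> b \<circ> b = id"
      using A4_partner[OF xc xne xx] by blast
    obtain g2 where g2G: "g2 \<in> G" and fg2: "f g2 = y" using fsurj[OF yab(1)] by blast
    obtain a' where aG: "a' \<in> G" and fa: "f a' = a" using fsurj[OF yab(2)] by blast
    obtain b' where bG: "b' \<in> G" and fb: "f b' = b" using fsurj[OF yab(3)] by blast
    have g2g2: "g2 \<circ> g2 = id"
      by (rule finj[OF Gcomp[OF g2G g2G] Gid]) (simp add: fhom[OF g2G g2G] fg2 yab(6) fid)
    have g2i: "\<And>u. g2 (g2 u) = u" using g2g2 by (metis comp_apply id_apply)
    have g2ne: "g2 \<noteq> g" using fg2 yab(5) x_def by auto
    have comm: "g \<circ> g2 = g2 \<circ> g"
      by (rule finj[OF Gcomp[OF gG g2G] Gcomp[OF g2G gG]])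
        (simp add: fhom[OF gG g2G] fhom[OF g2G gG] fg2 yab(7) flip: x_def)
    have commp: "\<And>u. g (g2 u) = g2 (g u)" using comm by (metis comp_apply)
    have g2ab: "g2 = a' \<circ> b'"
      by (rule finj[OF g2G Gcomp[OF aG bG]]) (simp add: fhom[OF aG bG] fa fb fg2 yab(8))
    have a3: "a' \<circ> a' \<circ> a' = id"
      by (rule finj[OF Gcomp[OF Gcomp[OF aG aG] aG] Gid])
        (simp add: fhom[OF Gcomp[OF aG aG] aG] fhom[OF aG aG] fa yab(9) fid)
    have b3: "b' \<circ> b' \<circ> b' = id"
      by (rule finj[OF Gcomp[OF Gcomp[OF bG bG] bG] Gid])
        (simp add: fhom[OF Gcomp[OF bG bG] bG] fhom[OF bG bG] fb yab(10) fid)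
    have presg2: "pres n g2"
      unfolding g2ab
      by (rule pres_comp; rule order3_pres[OF _ _ vV]) (use aG bG Gsub a3 b3 in auto)
    have presg: "pres n g"
      by (rule aut_side(1)[OF _ vV]) (use gG Gsub gv vV in auto)
    have g2v: "g2 v = v"
    proof (rule fixonly)
      show "g2 v \<in> KV n" using presg2 vV by (simp add: pres_def)
      show "g (g2 v) = g2 v" using commp gv by simp
    qed
    have oddn: "odd n"
    proof -
      have "even (card (KV n - {v}))"
      proof (rule even_card_inv[where f = g])
        show "finite (KV n - {v})" using finite_KV by simp
        fix u assume u: "u \<in> KV n - {v}"
        have "g u \<in> KV n" using u presg by (auto simp: pres_def)
        moreover have "g u \<noteq> v"
        proof
          assume "g u = v"
          then have "g (g u) = g v" by simp
          then show False using u gi gv by simp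
        qed
        ultimately show "g u \<in> KV n - {v}" by simp
        show "g (g u) = u" by (rule gi)
        show "g u \<noteq> u" using u fixonly[of u] by blast
      qed
      moreover have "card (KV n - {v}) = n - 1" using vV finite_KV card_KV by (simp add: card_Diff_singleton)
      moreover have "n \<ge> 1" using vV by (auto simp: KV_def)
      ultimately show ?thesis by (metis One_nat_def Suc_diff_1 even_Suc less_le_trans zero_less_one)
    qed
    have mat1: "mat 1 \<in> Ghat" using subgroup.one_closed[OF Ghat_sub] by (simp add: SO4_def)
    have Ghcomp: "\<And>A B. A \<in> Ghat \<Longrightarrow> B \<in> Ghat \<Longrightarrow> A ** B \<in> Ghat"
      using subgroup.m_closed[OF Ghat_sub] by (simp add: SO4_def)
    have GhSO: "\<And>A. A \<in> Ghat \<Longrightarrow> orthogonal_matrix A \<and> det A = 1"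
      using subgroup.subset[OF Ghat_sub] by (auto simp: SO4_def)
    have \<phi>hom: "\<And>A B. A \<in> Ghat \<Longrightarrow> B \<in> Ghat \<Longrightarrow> \<phi> (A ** B) = \<phi> A \<circ> \<phi> B"
      using \<phi>_iso by (simp add: iso_def hom_def Knn_aut_group_def SO4_def)
    have \<phi>bij: "bij_betw \<phi> Ghat G" using \<phi>_iso by (simp add: iso_def)
    have \<phi>inj: "\<And>A B. A \<in> Ghat \<Longrightarrow> B \<in> Ghat \<Longrightarrow> \<phi> A = \<phi> B \<Longrightarrow> A = B"
      using \<phi>bij by (auto simp: bij_betw_def inj_on_def)
    have \<phi>in: "\<And>A. A \<in> Ghat \<Longrightarrow> \<phi> A \<in> G" using \<phi>bij bij_betwE by blast
    have \<phi>surj: "\<And>h. h \<in> G \<Longrightarrow> \<exists>A\<in>Ghat. \<phi> A = h"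
      using \<phi>bij by (auto simp: bij_betw_def)
    have \<phi>1: "\<phi> (mat 1) = id"
    proof (rule perm_idem)
      show "\<phi> (mat 1) permutes Kvert n" using Gperm[OF \<phi>in[OF mat1]] .
      show "\<phi> (mat 1) \<circ> \<phi> (mat 1) = \<phi> (mat 1)" using \<phi>hom[OF mat1 mat1] by simp
    qed
    have noW: False if wW: "w \<in> KW n" and gw: "g w = w" and g2w: "g2 w = w" for w
    proof -
      obtain A1 where A1: "A1 \<in> Ghat" "\<phi> A1 = g" using \<phi>surj[OF gG] by blast
      obtain A2 where A2: "A2 \<in> Ghat" "\<phi> A2 = g2" using \<phi>surj[OF g2G] by blast
      have A11: "A1 ** A1 = mat 1"
        by (rule \<phi>inj[OF Ghcomp[OF A1(1) A1(1)] mat1]) (simp add: \<phi>hom[OF A1(1) A1(1)] A1(2) gg \<phi>1)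
      have A22: "A2 ** A2 = mat 1"
        by (rule \<phi>inj[OF Ghcomp[OF A2(1) A2(1)] mat1]) (simp add: \<phi>hom[OF A2(1) A2(1)] A2(2) g2g2 \<phi>1)
      have A1n: "A1 \<noteq> mat 1" using A1(2) \<phi>1 gne by auto
      have A2n: "A2 \<noteq> mat 1" using A2(2) \<phi>1 g2ne fg2 yab(4) fid by auto
      have "A1 = A2"
      proof (rule geom_main[OF emb vV wW])
        show "induces n pos edge A1 g" using induced A1 by auto
        show "induces n pos edge A2 g2" using induced A2 by auto
      qed (use gv gw g2v g2w GhSO[OF A1(1)] GhSO[OF A2(1)] A11 A22 A1n A2n in auto)
      then show False using A1(2) A2(2) g2ne by simp
    qed
    define F where "F = {w \<in> KW n. g w = w}"
    have FW: "F \<subseteq> KW n" by (auto simp: F_def)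
    have finF: "finite F" using FW finite_KW finite_subset by blast
    have evF: "even (card F)"
    proof (rule even_card_inv[where f = g2])
      show "finite F" by (rule finF)
      fix u assume u: "u \<in> F"
      show "g2 u \<in> F" using u presg2 commp by (auto simp: pres_def F_def)
      show "g2 (g2 u) = u" by (rule g2i)
      show "g2 u \<noteq> u" using u noW[of u] by (auto simp: F_def)
    qed
    have evS: "even (card (KW n - F))"
    proof (rule even_card_inv[where f = g])
      show "finite (KW n - F)" using finite_KW by simp
      fix u assume u: "u \<in> KW n - F"
      have "g u \<in> KW n" using u presg by (auto simp: pres_def)
      moreover have "g (g u) \<noteq> g u" using u gi by (auto simp: F_def)
      ultimately show "g u \<in> KW n - F" by (auto simp: F_def)
      show "g (g u) = u" by (rule gi)
      show "g u \<noteq> u" using u by (auto simp: F_def)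
    qed
    have "card (KW n - F) = card (KW n) - card F" using FW finF by (simp add: card_Diff_subset)
    moreover have "card F \<le> card (KW n)" using FW finite_KW card_mono by blast
    ultimately have "card (KW n) = card F + card (KW n - F)" by simp
    then have "even n" using evF evS card_KW[of n] by (metis even_add)
    then show False using oddn by simp
  qed
qed


end
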